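(* Let $n\in\mathbb{N}$ and $m\geq 3$. Then \[ B_n(d_1,d_2,\dots, d_n)= n!\cdot e_{m+2,n}, \] where $d_j=-(j-1)!\cdot \sigma'_m(j)$ for $j\ge1$.
   Context: The complete exponential Bell polynomials $B_n(x_1,\dots,x_n)$ are defined by $\exp\big(\sum_{j\ge1}x_j\frac{t^j}{j!}\big)=\sum_{n\ge0}B_n(x_1,\dots,x_n)\frac{t^n}{n!}$. For $m\ge3$ and $j\in\mathbb{N}$, $\sigma'_m(j)$ is the sum of the positive divisors $d$ of $j$ with $d\equiv 0$, $1$ or $m-1 \pmod m$. For $g\ge5$ and $n\in\mathbb{N}_0$, $e_{g,n}=1$ if $n=0$, $e_{g,n}=(-1)^k$ if $n=P_{g,k}$ or $n=Q_{g,k}$ for some $k\in\mathbb{N}$ (where $P_{g,k}=\frac{k((g-2)k-(g-4))}{2}$, $Q_{g,k}=\frac{k((g-2)k+(g-4))}{2}$), and $e_{g,n}=0$ otherwise. *)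

theory Defs
  imports "HOL-Computational_Algebra.Formal_Power_Series"
begin

text \<open>Complete exponential Bell polynomial, defined through its generating function:
  exp(\<Sum>j\<ge>1 x_j t^j/j!) = \<Sum>n B_n(x) t^n/n!.  The exponential of a power series with
  zero constant term is the composition of the exponential series with it.\<close>
definition bell_complete :: "nat \<Rightarrow> (nat \<Rightarrow> real) \<Rightarrow> real" where
  "bell_complete n x =
     fact n * fps_nth (fps_exp 1 oo Abs_fps (\<lambda>j. if j = 0 then 0 else x j / fact j)) n"

definition sigma' :: "nat \<Rightarrow> nat \<Rightarrow> nat" where
  "sigma' m j = (\<Sum>d \<in> {d. d dvd j \<and> (d mod m = 0 \<or> d mod m = 1 \<or> d mod m = m - 1)}. d)"

definition Pg :: "nat \<Rightarrow> nat \<Rightarrow> nat" where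
  "Pg g k = k * ((g - 2) * k - (g - 4)) div 2"

definition Qg :: "nat \<Rightarrow> nat \<Rightarrow> nat" where
  "Qg g k = k * ((g - 2) * k + (g - 4)) div 2"

definition e_coef :: "nat \<Rightarrow> nat \<Rightarrow> int" where
  "e_coef g n =
     (if n = 0 then 1
      else if \<exists>k\<ge>1. n = Pg g k \<or> n = Qg g k
      then (-1) ^ (SOME k. k \<ge> 1 \<and> (n = Pg g k \<or> n = Qg g k))
      else 0)"

end

theory Submission
  imports Defs
begin


definition fcong :: "nat \<Rightarrow> real fps \<Rightarrow> real fps \<Rightarrow> bool" where
  "fcong N a b \<longleftrightarrow> (\<forall>i\<le>N. fps_nth a i = fps_nth b i)"

lemma fcong_refl[simp]: "fcong N a a" by (simp add: fcong_def)
lemma fcong_sym: "fcong N a b \<Longrightarrow> fcong N b a" by (simp add: fcong_def)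
lemma fcong_trans: "fcong N a b \<Longrightarrow> fcong N b c \<Longrightarrow> fcong N a c" by (simp add: fcong_def)

lemma fcong_mult_right: "fcong N a b \<Longrightarrow> fcong N (a * c) (b * c)"
  unfolding fcong_def fps_mult_nth by (auto intro!: sum.cong)

lemma fcong_mult: "fcong N a b \<Longrightarrow> fcong N c d \<Longrightarrow> fcong N (a * c) (b * d)"
proof -
  assume 1: "fcong N a b" and 2: "fcong N c d"
  have "fcong N (a * c) (b * c)" using 1 by (rule fcong_mult_right)
  moreover have "fcong N (c * b) (d * b)" using 2 by (rule fcong_mult_right)
  ultimately show ?thesis by (metis fcong_trans mult.commute)
qed

lemma fcong_add: "fcong N a b \<Longrightarrow> fcong N c d \<Longrightarrow> fcong N (a + c) (b + d)"
  by (simp add: fcong_def)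
lemma fcong_diff: "fcong N a b \<Longrightarrow> fcong N c d \<Longrightarrow> fcong N (a - c) (b - d)"
  by (simp add: fcong_def)
lemma fcong_uminus: "fcong N a b \<Longrightarrow> fcong N (- a) (- b)"
  by (simp add: fcong_def)

lemma fcong_sum: "(\<And>k. k \<in> S \<Longrightarrow> fcong N (f k) (g k)) \<Longrightarrow> fcong N (sum f S) (sum g S)"
  by (simp add: fcong_def fps_sum_nth)

lemma fcong_prod: "(\<And>k. k \<in> S \<Longrightarrow> fcong N (f k) (g k)) \<Longrightarrow> fcong N (prod f S) (prod g S)"
proof (induction S rule: infinite_finite_induct)
  case (insert x F)
  then show ?case by (simp add: fcong_mult)
qed auto

lemma fcong_cancel:
  assumes "fcong N (a * e) (b * e)" "fps_nth e 0 \<noteq> 0"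
  shows "fcong N a b"
proof -
  have "fcong N (a * e * inverse e) (b * e * inverse e)"
    using assms(1) by (rule fcong_mult_right)
  then show ?thesis using inverse_mult_eq_1'[OF assms(2)] by (simp add: mult.assoc)
qed

lemma fcong_Xpow_zero: "N < e \<Longrightarrow> fcong N (fps_X ^ e * a) 0"
  by (simp add: fcong_def fps_X_power_mult_nth)

lemma fcong_Xpow_one: "N < e \<Longrightarrow> fcong N (1 - fps_X ^ e) 1"
  by (simp add: fcong_def fps_X_power_nth)

fun gb :: "nat \<Rightarrow> nat \<Rightarrow> nat \<Rightarrow> real fps" where
  "gb m 0 b = 1"
| "gb m (Suc a) 0 = 1"
| "gb m (Suc a) (Suc b) = gb m a (Suc b) + fps_X ^ (m * (a + 1)) * gb m (Suc a) b"

lemma gb_0_right[simp]: "gb m a 0 = 1" by (cases a) auto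

definition qp :: "nat \<Rightarrow> nat \<Rightarrow> real fps" where
  "qp m a = (\<Prod>i<a. (1 - fps_X ^ (m * (i + 1))))"

lemma qp_Suc: "qp m (Suc a) = qp m a * (1 - fps_X ^ (m * (a + 1)))"
  by (simp add: qp_def)

lemma qp_0[simp]: "qp m 0 = 1" by (simp add: qp_def)

lemma nth0_prod: "fps_nth (prod f S) 0 = prod (\<lambda>k. fps_nth (f k) 0) S"
  by (induction S rule: infinite_finite_induct) (auto simp: fps_mult_nth)

lemma qp_nth0: "m > 0 \<Longrightarrow> fps_nth (qp m a) 0 = 1"
  by (simp add: qp_def nth0_prod fps_X_power_nth)

lemma gb_prod: "gb m a b * qp m a * qp m b = qp m (a + b)"
proof (induction m a b rule: gb.induct)
  case (1 m b) then show ?case by simp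
next
  case (2 m a) then show ?case by simp
next
  case (3 m a b)
  let ?X = "fps_X :: real fps"
  have "gb m (Suc a) (Suc b) * qp m (Suc a) * qp m (Suc b)
     = (gb m a (Suc b) * qp m a * qp m (Suc b)) * (1 - ?X ^ (m * (a + 1)))
       + ?X ^ (m * (a + 1)) * (gb m (Suc a) b * qp m (Suc a) * qp m b) * (1 - ?X ^ (m * (b + 1)))"
    by (simp add: qp_Suc algebra_simps)
  also have "\<dots> = qp m (Suc (a + b)) * (1 - ?X ^ (m * (a + 1)))
       + ?X ^ (m * (a + 1)) * qp m (Suc (a + b)) * (1 - ?X ^ (m * (b + 1)))"
    using 3 by simp
  also have "\<dots> = qp m (Suc (a + b)) * (1 - ?X ^ (m * (a + 1)) * ?X ^ (m * (b + 1)))"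
    by (simp add: algebra_simps)
  also have "?X ^ (m * (a + 1)) * ?X ^ (m * (b + 1)) = ?X ^ (m * (Suc (a + b) + 1))"
    by (simp add: power_add[symmetric] algebra_simps)
  finally show ?case by (simp add: qp_Suc)
qed

lemma gb_sym:
  assumes "m > 0" shows "gb m a b = gb m b a"
proof -
  have "gb m a b * (qp m a * qp m b) = gb m b a * (qp m a * qp m b)"
    using gb_prod[of m a b] gb_prod[of m b a] by (simp add: algebra_simps)
  moreover have "fps_nth (qp m a * qp m b) 0 = 1"
    using qp_nth0[OF assms] by (simp add: fps_mult_nth)
  then have "qp m a * qp m b \<noteq> 0" by auto
  ultimately show ?thesis by simp
qed

definition Gi :: "nat \<Rightarrow> int \<Rightarrow> int \<Rightarrow> real fps" where
  "Gi m a b = (if a < 0 \<or> b < 0 then 0 else gb m (nat a) (nat b))"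

lemma Gi_pascal1:
  assumes "\<not> (a = 0 \<and> b = 0)"
  shows "Gi m a b = Gi m (a - 1) b + fps_X ^ (m * nat a) * Gi m a (b - 1)"
proof (cases "a < 0 \<or> b < 0")
  case True then show ?thesis by (auto simp: Gi_def)
next
  case False
  then obtain a' b' where ab: "a = int a'" "b = int b'"
    by (metis nonneg_int_cases not_less)
  show ?thesis
  proof (cases a')
    case 0 then show ?thesis using ab assms by (auto simp: Gi_def)
  next
    case (Suc a'')
    show ?thesis
    proof (cases b')
      case 0 then show ?thesis using ab Suc by (auto simp: Gi_def)
    next
      case (Suc b'')
      have e: "nat a = Suc a''" "nat b = Suc b''" "nat (b - 1) = b''" "nat (a - 1) = a''"
        "\<not> a < 0" "\<not> b < 0" "\<not> a - 1 < 0" "\<not> b - 1 < 0" "\<not> a < 1" "\<not> b < 1"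
        using ab Suc \<open>a' = Suc a''\<close> by auto
      show ?thesis unfolding Gi_def e using e by simp
    qed
  qed
qed

lemma Gi_sym: "m > 0 \<Longrightarrow> Gi m a b = Gi m b a"
  using gb_sym by (auto simp: Gi_def)

lemma Gi_pascal2:
  assumes "\<not> (a = 0 \<and> b = 0)" "m > 0"
  shows "Gi m a b = fps_X ^ (m * nat b) * Gi m (a - 1) b + Gi m a (b - 1)"
proof -
  have "Gi m a b = Gi m b a" using Gi_sym assms by blast
  also have "\<dots> = Gi m (b - 1) a + fps_X ^ (m * nat b) * Gi m b (a - 1)"
    using Gi_pascal1[of b a m] assms by auto
  finally show ?thesis using Gi_sym[OF assms(2)] by (simp add: add.commute)
qed



lemma Gi_neg: "a < 0 \<or> b < 0 \<Longrightarrow> Gi m a b = 0" by (simp add: Gi_def)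

lemma Gi_key:
  assumes "a + b \<ge> 2" "m > 0"
  shows "Gi m a b = (1 + fps_X ^ (m * nat (a + b - 1))) * Gi m (a - 1) (b - 1)
            + fps_X ^ (m * nat b) * Gi m (a - 2) b + fps_X ^ (m * nat a) * Gi m a (b - 2)"
proof -
  have 1: "Gi m a b = fps_X ^ (m * nat b) * Gi m (a - 1) b + Gi m a (b - 1)"
    using Gi_pascal2[of a b m] assms by auto
  have 2: "Gi m (a - 1) b = Gi m (a - 1 - 1) b + fps_X ^ (m * nat (a - 1)) * Gi m (a - 1) (b - 1)"
    using Gi_pascal1[of "a - 1" b m] assms by auto
  have 3: "Gi m a (b - 1) = Gi m (a - 1) (b - 1) + fps_X ^ (m * nat a) * Gi m a (b - 1 - 1)"
    using Gi_pascal1[of a "b - 1" m] assms by auto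
  have 4: "fps_X ^ (m * nat b) * (fps_X ^ (m * nat (a - 1)) * Gi m (a - 1) (b - 1))
         = fps_X ^ (m * nat (a + b - 1)) * Gi m (a - 1) (b - 1)"
  proof (cases "a \<ge> 1 \<and> b \<ge> 1")
    case True
    then have h: "nat b + nat (a - 1) = nat (a + b - 1)" by auto
    then have "m * nat b + m * nat (a - 1) = m * nat (a + b - 1)"
      by (metis distrib_left)
    then show ?thesis by (simp add: power_add[symmetric] mult.assoc[symmetric])
  next
    case False
    then show ?thesis by (auto simp: Gi_neg)
  qed
  show ?thesis
    unfolding 1 2 3 using 4 by (simp add: algebra_simps)
qed

definition fei :: "nat \<Rightarrow> int \<Rightarrow> int" where
  "fei m k = int m * (k * (k - 1) div 2) + k"

definition fe :: "nat \<Rightarrow> int \<Rightarrow> nat" where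
  "fe m k = nat (fei m k)"

lemma even_kk: "2 * (k * (k - 1) div 2) = k * (k - 1)" for k :: int
  by simp

lemma fei2: "2 * fei m k = int m * k * (k - 1) + 2 * k"
  unfolding fei_def by (simp add: distrib_left even_kk[of k, symmetric] algebra_simps)

lemma fei_ge: assumes "m \<ge> 3" shows "fei m k \<ge> \<bar>k\<bar>"
proof -
  have "k * (k - 1) \<ge> 0"
    by (cases "k \<ge> 1") (auto intro!: mult_nonneg_nonneg mult_nonpos_nonpos)
  then have "int m * k * (k - 1) \<ge> 0" by (simp add: mult.assoc)
  moreover have "int m * k * (k - 1) \<ge> 3 * (k * (k - 1))"
  proof -
    have "int m * (k * (k - 1)) \<ge> 3 * (k * (k - 1))"
      by (rule mult_right_mono) (use assms \<open>k * (k - 1) \<ge> 0\<close> in auto)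
    then show ?thesis by (simp add: mult.assoc)
  qed
  moreover have "k \<le> -1 \<Longrightarrow> k * (k - 1) \<ge> -2 * k"
  proof -
    assume "k \<le> -1"
    then have "k * (k + 1) \<ge> 0" by (intro mult_nonpos_nonpos) auto
    moreover have "k * (k - 1) = k * (k + 1) - 2 * k" by (simp add: algebra_simps)
    ultimately show ?thesis by linarith
  qed
  ultimately have "2 * fei m k \<ge> 2 * \<bar>k\<bar>"
  proof (cases "k \<ge> 0")
    case True
    then have "\<bar>k\<bar> = k" by simp
    then show ?thesis using \<open>int m * k * (k - 1) \<ge> 0\<close> fei2[of m k] by linarith
  next
    case False
    then have "\<bar>k\<bar> = - k" "k \<le> -1" by auto
    moreover have "k * (k - 1) \<ge> -2 * k" using \<open>k \<le> -1\<close> \<open>k \<le> -1 \<Longrightarrow> k * (k - 1) \<ge> -2 * k\<close> by blast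
    ultimately show ?thesis using \<open>int m * k * (k - 1) \<ge> 3 * (k * (k - 1))\<close> fei2[of m k] by linarith
  qed
  then show ?thesis by simp
qed

lemma fei_nonneg: "m \<ge> 3 \<Longrightarrow> fei m k \<ge> 0"
  using fei_ge[of m k] by simp

lemma int_fe: "m \<ge> 3 \<Longrightarrow> int (fe m k) = fei m k"
  using fei_nonneg by (simp add: fe_def)

lemma fei_diff1: "fei m k = fei m (k - 1) + int m * (k - 1) + 1"
proof -
  have A: "2 * fei m k = int m * k * (k - 1) + 2 * k" by (rule fei2)
  have B: "2 * fei m (k - 1) = int m * (k - 1) * (k - 1 - 1) + 2 * (k - 1)" by (rule fei2)
  have C: "int m * k * (k - 1) = int m * (k - 1) * (k - 1 - 1) + 2 * (int m * (k - 1))"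
    by (simp add: algebra_simps)
  show ?thesis using A B C by (smt (verit))
qed

definition sg :: "int \<Rightarrow> real fps" where
  "sg k = (if even k then 1 else -1)"

lemma sg_minus1: "sg (k - 1) = - sg k" by (simp add: sg_def)
lemma sg_plus1: "sg (k + 1) = - sg k" by (simp add: sg_def)

definition D :: "nat \<Rightarrow> nat \<Rightarrow> int \<Rightarrow> real fps" where
  "D m n k = sg k * Gi m (int n + k) (int n - k) * fps_X ^ fe m k"

lemma D_out: assumes "\<bar>k\<bar> > int n" shows "D m n k = 0"
proof -
  have "int n + k < 0 \<or> int n - k < 0" using assms by arith
  then show ?thesis by (simp add: D_def Gi_neg)
qed

lemma D_rec:
  assumes "m \<ge> 3"
  shows "D m (Suc n) k = (1 + fps_X ^ (2 * m * n + m)) * D m n k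
            - fps_X ^ (m * n + 1) * D m n (k - 1) - fps_X ^ (m * n + m - 1) * D m n (k + 1)"
proof -
  let ?X = "fps_X :: real fps"
  have key: "Gi m (int (Suc n) + k) (int (Suc n) - k)
     = (1 + ?X ^ (m * nat (2 * int n + 1))) * Gi m (int n + k) (int n - k)
       + ?X ^ (m * nat (int n + 1 - k)) * Gi m (int n + (k - 1)) (int n - (k - 1))
       + ?X ^ (m * nat (int n + 1 + k)) * Gi m (int n + (k + 1)) (int n - (k + 1))"
    using Gi_key[of "int (Suc n) + k" "int (Suc n) - k" m] assms
    by (simp add: algebra_simps)
  have e1: "nat (2 * int n + 1) = 2 * n + 1" by simp
  have t2: "?X ^ fe m k * ?X ^ (m * nat (int n + 1 - k)) * Gi m (int n + (k - 1)) (int n - (k - 1))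
      = ?X ^ (m * n + 1) * ?X ^ fe m (k - 1) * Gi m (int n + (k - 1)) (int n - (k - 1))"
  proof (cases "k \<le> int n + 1")
    case True
    have "int (fe m k + m * nat (int n + 1 - k)) = int (m * n + 1 + fe m (k - 1))"
      using True int_fe[OF assms] fei_diff1[of m k] by (simp add: algebra_simps)
    then have "fe m k + m * nat (int n + 1 - k) = m * n + 1 + fe m (k - 1)" by linarith
    then show ?thesis by (simp add: power_add[symmetric])
  next
    case False then show ?thesis by (simp add: Gi_neg)
  qed
  have t3: "?X ^ fe m k * ?X ^ (m * nat (int n + 1 + k)) * Gi m (int n + (k + 1)) (int n - (k + 1))
      = ?X ^ (m * n + m - 1) * ?X ^ fe m (k + 1) * Gi m (int n + (k + 1)) (int n - (k + 1))"
  proof (cases "k \<ge> - int n - 1")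
    case True
    have "int (fe m k + m * nat (int n + 1 + k)) = int (m * n + m - 1 + fe m (k + 1))"
      using True int_fe[OF assms] fei_diff1[of m "k + 1"] assms by (simp add: algebra_simps of_nat_diff)
    then have "fe m k + m * nat (int n + 1 + k) = m * n + m - 1 + fe m (k + 1)" by linarith
    then show ?thesis by (simp add: power_add[symmetric])
  next
    case False then show ?thesis by (simp add: Gi_neg)
  qed
  have "D m (Suc n) k = sg k * ?X ^ fe m k * Gi m (int (Suc n) + k) (int (Suc n) - k)"
    by (simp add: D_def algebra_simps)
  also have "\<dots> = sg k * ((1 + ?X ^ (m * (2 * n + 1))) * Gi m (int n + k) (int n - k) * ?X ^ fe m k)
     + sg k * (?X ^ fe m k * ?X ^ (m * nat (int n + 1 - k)) * Gi m (int n + (k - 1)) (int n - (k - 1)))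
     + sg k * (?X ^ fe m k * ?X ^ (m * nat (int n + 1 + k)) * Gi m (int n + (k + 1)) (int n - (k + 1)))"
    unfolding key e1 by (simp add: algebra_simps)
  also have "\<dots> = (1 + ?X ^ (2 * m * n + m)) * D m n k
            - ?X ^ (m * n + 1) * D m n (k - 1) - ?X ^ (m * n + m - 1) * D m n (k + 1)"
    unfolding t2 t3 D_def sg_minus1 sg_plus1 by (simp add: algebra_simps)
  finally show ?thesis .
qed



definition R :: "nat \<Rightarrow> nat \<Rightarrow> real fps" where
  "R m n = (\<Sum>k\<in>{- int n..int n}. D m n k)"

definition L :: "nat \<Rightarrow> nat \<Rightarrow> real fps" where
  "L m n = (\<Prod>i<n. (1 - fps_X ^ (m * i + 1)) * (1 - fps_X ^ (m * i + m - 1)))"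

lemma sum_support:
  fixes f :: "int \<Rightarrow> real fps"
  assumes "\<And>k. \<bar>k\<bar> > int n \<Longrightarrow> f k = 0" "A \<le> - int n" "int n \<le> B"
  shows "sum f {A..B} = sum f {- int n..int n}"
  by (rule sum.mono_neutral_right) (use assms in auto)

lemma sum_shift:
  fixes f :: "int \<Rightarrow> real fps"
  shows "(\<Sum>k\<in>{A..B}. f (k + c)) = sum f {A + c..B + c}"
  by (rule sum.reindex_bij_witness[of _ "\<lambda>k. k - c" "\<lambda>k. k + c"]) auto

lemma R_Suc:
  assumes "m \<ge> 3"
  shows "R m (Suc n) = (1 - fps_X ^ (m * n + 1)) * (1 - fps_X ^ (m * n + m - 1)) * R m n"
proof -
  let ?X = "fps_X :: real fps"
  let ?I = "{- int (Suc n)..int (Suc n)}"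
  have s0: "(\<Sum>k\<in>?I. D m n k) = R m n"
    unfolding R_def by (rule sum_support) (auto intro: D_out)
  have s1: "(\<Sum>k\<in>?I. D m n (k + -1)) = R m n"
    unfolding sum_shift R_def by (rule sum_support) (auto intro: D_out)
  have s2: "(\<Sum>k\<in>?I. D m n (k + 1)) = R m n"
    unfolding sum_shift R_def by (rule sum_support) (auto intro: D_out)
  have "R m (Suc n) = (\<Sum>k\<in>?I. (1 + ?X ^ (2 * m * n + m)) * D m n k
            - ?X ^ (m * n + 1) * D m n (k + -1) - ?X ^ (m * n + m - 1) * D m n (k + 1))"
    unfolding R_def using D_rec[OF assms] by simp
  also have "\<dots> = (1 + ?X ^ (2 * m * n + m)) * (\<Sum>k\<in>?I. D m n k)
            - ?X ^ (m * n + 1) * (\<Sum>k\<in>?I. D m n (k + -1)) - ?X ^ (m * n + m - 1) * (\<Sum>k\<in>?I. D m n (k + 1))"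
    by (simp add: sum_subtractf sum_distrib_left)
  also have "\<dots> = (1 + ?X ^ (2 * m * n + m) - ?X ^ (m * n + 1) - ?X ^ (m * n + m - 1)) * R m n"
    unfolding s0 s1 s2 by (simp add: algebra_simps)
  also have "?X ^ (2 * m * n + m) = ?X ^ (m * n + 1) * ?X ^ (m * n + m - 1)"
  proof -
    have "2 * m * n + m = (m * n + 1) + (m * n + m - 1)" using assms by simp
    then show ?thesis by (metis power_add)
  qed
  also have "1 + ?X ^ (m * n + 1) * ?X ^ (m * n + m - 1) - ?X ^ (m * n + 1) - ?X ^ (m * n + m - 1)
     = (1 - ?X ^ (m * n + 1)) * (1 - ?X ^ (m * n + m - 1))"
    by (simp add: algebra_simps)
  finally show ?thesis .
qed

lemma R_0: "R m 0 = 1"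
  by (simp add: R_def D_def sg_def Gi_def fe_def fei_def)

lemma L_eq_R: "m \<ge> 3 \<Longrightarrow> L m n = R m n"
proof (induction n)
  case 0 then show ?case by (simp add: L_def R_0)
next
  case (Suc n)
  then show ?case by (simp add: L_def R_Suc algebra_simps)
qed



lemma qp_cong: assumes "m > 0" "N \<le> a" shows "fcong N (qp m a) (qp m N)"
  using assms(2)
proof (induction a rule: dec_induct)
  case (step a)
  have "fcong N (1 - fps_X ^ (m * (a + 1))) 1"
  proof (rule fcong_Xpow_one)
    have "a + 1 \<le> m * (a + 1)" using mult_le_mono1[of 1 m "a + 1"] assms(1) by simp
    then show "N < m * (a + 1)" using step(1) by linarith
  qed
  then have "fcong N (qp m a * (1 - fps_X ^ (m * (a + 1)))) (qp m N * 1)"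
    using step by (intro fcong_mult)
  then show ?case by (simp add: qp_Suc)
qed simp

lemma gb_cong:
  assumes "m > 0" "N \<le> a" "N \<le> b" "N \<le> n" "a + b = 2 * n"
  shows "fcong N (qp m n * gb m a b) 1"
proof -
  let ?E = "qp m N * qp m N"
  have eq: "(qp m n * gb m a b) * (qp m a * qp m b) = qp m n * qp m (2 * n)"
    using gb_prod[of m a b] assms(5) by (simp add: algebra_simps)
  have "fcong N ((qp m n * gb m a b) * (qp m a * qp m b)) ((qp m n * gb m a b) * ?E)"
    by (intro fcong_mult fcong_refl qp_cong) (use assms in auto)
  moreover have "fcong N (qp m n * qp m (2 * n)) (1 * ?E)"
    by (simp only: mult_1_left, intro fcong_mult qp_cong) (use assms in auto)
  ultimately have "fcong N ((qp m n * gb m a b) * ?E) (1 * ?E)"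
    unfolding eq by (metis fcong_sym fcong_trans)
  moreover have "fps_nth ?E 0 \<noteq> 0" using qp_nth0[OF assms(1)] by (simp add: fps_mult_nth)
  ultimately show ?thesis by (rule fcong_cancel)
qed

definition Th :: "nat \<Rightarrow> nat \<Rightarrow> real fps" where
  "Th m n = (\<Sum>k\<in>{- int n..int n}. sg k * fps_X ^ fe m k)"

lemma R_cong_Th:
  assumes "m \<ge> 3" "2 * N \<le> n"
  shows "fcong N (qp m n * R m n) (Th m n)"
proof -
  have "qp m n * R m n = (\<Sum>k\<in>{- int n..int n}. fps_X ^ fe m k * (sg k * (qp m n * Gi m (int n + k) (int n - k))))"
    unfolding R_def D_def by (simp add: sum_distrib_left algebra_simps)
  moreover have "Th m n = (\<Sum>k\<in>{- int n..int n}. fps_X ^ fe m k * (sg k * 1))"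
    unfolding Th_def by (simp add: algebra_simps)
  moreover have "fcong N (\<Sum>k\<in>{- int n..int n}. fps_X ^ fe m k * (sg k * (qp m n * Gi m (int n + k) (int n - k))))
                   (\<Sum>k\<in>{- int n..int n}. fps_X ^ fe m k * (sg k * 1))"
  proof (rule fcong_sum)
    fix k assume k: "k \<in> {- int n..int n}"
    show "fcong N (fps_X ^ fe m k * (sg k * (qp m n * Gi m (int n + k) (int n - k)))) (fps_X ^ fe m k * (sg k * 1))"
    proof (cases "\<bar>k\<bar> \<le> int N")
      case True
      have "Gi m (int n + k) (int n - k) = gb m (nat (int n + k)) (nat (int n - k))"
      proof -
        have "int n + k \<ge> 0" "int n - k \<ge> 0" using True assms by arith+
        then show ?thesis by (simp add: Gi_def)
      qed
      moreover have "fcong N (qp m n * gb m (nat (int n + k)) (nat (int n - k))) 1"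
        by (rule gb_cong) (use True assms in auto)
      ultimately show ?thesis by (intro fcong_mult fcong_refl) simp
    next
      case False
      then have "N < fe m k" using fei_ge[OF assms(1), of k] int_fe[OF assms(1), of k] by linarith
      then show ?thesis by (metis fcong_Xpow_zero fcong_sym fcong_trans)
    qed
  qed
  ultimately show ?thesis by simp
qed



lemma fei_inj:
  assumes "m \<ge> 3" "fei m a = fei m b" shows "a = b"
proof -
  have "2 * fei m a = 2 * fei m b" using assms by simp
  then have "int m * a * (a - 1) + 2 * a = int m * b * (b - 1) + 2 * b" unfolding fei2 .
  moreover have "int m * a * (a - 1) + 2 * a - (int m * b * (b - 1) + 2 * b)
      = (a - b) * (int m * (a + b - 1) + 2)" by (simp add: algebra_simps)
  ultimately have 0: "(a - b) * (int m * (a + b - 1) + 2) = 0" by simp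
  have "int m * (a + b - 1) + 2 \<noteq> 0"
  proof (cases "a + b - 1 \<ge> 0")
    case True then have "int m * (a + b - 1) \<ge> 0" by simp
    then show ?thesis by linarith
  next
    case False
    then have "int m * (a + b - 1) \<le> int m * (-1)" by (intro mult_left_mono) auto
    then show ?thesis using assms by linarith
  qed
  then show ?thesis using 0 by simp
qed

lemma fe_inj: "m \<ge> 3 \<Longrightarrow> fe m a = fe m b \<Longrightarrow> a = b"
  using fei_inj int_fe by metis

lemma fe_0[simp]: "fe m 0 = 0" by (simp add: fe_def fei_def)

lemma Pg_fei:
  assumes "m \<ge> 3" "k \<ge> 1"
  shows "int (Pg (m + 2) k) = fei m (int k)"
proof -
  have a: "m * k \<ge> m - 2" using assms by (metis diff_le_self le_trans mult_le_mono2 mult_1_right)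
  have "int (Pg (m + 2) k) = int (k * (m * k - (m - 2))) div 2"
    by (simp add: Pg_def zdiv_int)
  also have "int (k * (m * k - (m - 2))) = int k * (int m * int k - int m + 2)"
    using a assms by (simp add: of_nat_diff)
  also have "\<dots> = 2 * fei m (int k)" unfolding fei2 by (simp add: algebra_simps)
  finally show ?thesis by simp
qed

lemma Qg_fei:
  assumes "m \<ge> 3" "k \<ge> 1"
  shows "int (Qg (m + 2) k) = fei m (- int k)"
proof -
  have "int (Qg (m + 2) k) = int (k * (m * k + (m - 2))) div 2"
    by (simp add: Qg_def zdiv_int)
  also have "int (k * (m * k + (m - 2))) = int k * (int m * int k + int m - 2)"
    using assms by (simp add: of_nat_diff)
  also have "\<dots> = 2 * fei m (- int k)" unfolding fei2 by (simp add: algebra_simps)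
  finally show ?thesis by simp
qed

lemma Th_nth:
  assumes "m \<ge> 3" "N \<le> n"
  shows "fps_nth (Th m n) N = real_of_int (e_coef (m + 2) N)"
proof -
  define s :: "int \<Rightarrow> real" where "s k = (if even k then 1 else -1)" for k
  define Z where "Z = {k \<in> {- int n..int n}. fe m k = N}"
  have "fps_nth (Th m n) N = (\<Sum>k\<in>{- int n..int n}. if fe m k = N then s k else 0)"
    unfolding Th_def fps_sum_nth
    by (intro sum.cong refl) (auto simp: sg_def s_def mult.commute[of _ "fps_X ^ _"] fps_X_power_mult_nth)
  also have "\<dots> = sum s Z"
    unfolding Z_def by (rule sum.inter_filter[symmetric]) simp
  finally have th: "fps_nth (Th m n) N = sum s Z" .
  have inZ: "z \<in> Z" if "fe m z = N" for z
  proof -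
    have "\<bar>z\<bar> \<le> int N" using fei_ge[OF assms(1), of z] int_fe[OF assms(1), of z] that by simp
    then show ?thesis using that assms unfolding Z_def by auto
  qed
  have Zsing: "Z = {z}" if "fe m z = N" for z
    using inZ[OF that] that fe_inj[OF assms(1)] unfolding Z_def by auto
  show ?thesis
  proof (cases "N = 0")
    case True
    then have "Z = {0}" using Zsing[of 0] by simp
    then show ?thesis using th True by (simp add: e_coef_def s_def)
  next
    case N0: False
    show ?thesis
    proof (cases "\<exists>k\<ge>1. N = Pg (m + 2) k \<or> N = Qg (m + 2) k")
      case True
      define k0 where "k0 = (SOME k. k \<ge> 1 \<and> (N = Pg (m + 2) k \<or> N = Qg (m + 2) k))"
      have k0: "k0 \<ge> 1 \<and> (N = Pg (m + 2) k0 \<or> N = Qg (m + 2) k0)"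
        unfolding k0_def by (rule someI_ex) (use True in blast)
      define z where "z = (if N = Pg (m + 2) k0 then int k0 else - int k0)"
      have "int (fe m z) = int N"
        using k0 Pg_fei[OF assms(1), of k0] Qg_fei[OF assms(1), of k0] int_fe[OF assms(1), of z]
        unfolding z_def by auto
      then have "fe m z = N" by simp
      then have "Z = {z}" by (rule Zsing)
      moreover have "s z = (-1) ^ k0"
        unfolding s_def z_def by (auto simp: even_of_nat)
      moreover have "e_coef (m + 2) N = (-1) ^ (SOME k. k \<ge> 1 \<and> (N = Pg (m + 2) k \<or> N = Qg (m + 2) k))"
        using N0 True by (simp add: e_coef_def)
      then have "e_coef (m + 2) N = (-1) ^ k0" unfolding k0_def .
      ultimately show ?thesis using th by simp
    next
      case False
      have "Z = {}"
      proof (rule ccontr)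
        assume "Z \<noteq> {}"
        then obtain k where k: "fe m k = N" unfolding Z_def by auto
        then have "k \<noteq> 0" using N0 by auto
        show False
        proof (cases "k > 0")
          case True
          then have "int (Pg (m + 2) (nat k)) = fei m k" using Pg_fei[OF assms(1), of "nat k"] by simp
          then have "N = Pg (m + 2) (nat k)" using k int_fe[OF assms(1), of k] by simp
          then show False using False True by (metis One_nat_def Suc_leI zero_less_nat_eq)
        next
          case False': False
          then have "k < 0" using \<open>k \<noteq> 0\<close> by simp
          then have "int (Qg (m + 2) (nat (- k))) = fei m k" using Qg_fei[OF assms(1), of "nat (- k)"] by simp
          then have "N = Qg (m + 2) (nat (- k))" using k int_fe[OF assms(1), of k] by simp
          then show False using False \<open>k < 0\<close> by (metis One_nat_def Suc_leI zero_less_nat_eq neg_0_less_iff_less)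
        qed
      qed
      then show ?thesis using th N0 False by (simp add: e_coef_def)
    qed
  qed
qed



definition PU :: "nat set \<Rightarrow> real fps" where
  "PU U = (\<Prod>d\<in>U. (1 - fps_X ^ d))"

definition SU :: "nat set \<Rightarrow> real fps" where
  "SU U = Abs_fps (\<lambda>j. if j = 0 then 0 else real (\<Sum>d\<in>{d\<in>U. d dvd j}. d))"

definition Sd :: "nat \<Rightarrow> real fps" where
  "Sd d = Abs_fps (\<lambda>j. if j \<noteq> 0 \<and> d dvd j then real d else 0)"

lemma Sd_mult:
  assumes "d > 0" shows "Sd d * (1 - fps_X ^ d) = fps_const (real d) * fps_X ^ d"
proof (rule fps_ext)
  fix j
  have "fps_nth (Sd d * (1 - fps_X ^ d)) j = fps_nth (Sd d) j - fps_nth (fps_X ^ d * Sd d) j"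
    by (simp add: algebra_simps)
  also have "\<dots> = fps_nth (fps_const (real d) * fps_X ^ d) j"
  proof -
    consider "j < d" | "j = d" | "j > d" by linarith
    then show ?thesis
    proof cases
      case 1
      then have "\<not> (j \<noteq> 0 \<and> d dvd j)" using dvd_imp_le by fastforce
      then show ?thesis using 1 by (simp add: Sd_def fps_X_power_mult_nth)
    next
      case 2 then show ?thesis using assms by (simp add: Sd_def fps_X_power_mult_nth)
    next
      case 3
      then have jj: "j = (j - d) + d" by simp
      have "d dvd j \<longleftrightarrow> d dvd (j - d)" by (subst jj) (rule dvd_add_triv_right_iff)
      moreover have "j \<noteq> 0" "j - d \<noteq> 0" using 3 by auto
      ultimately show ?thesis using 3 by (simp add: Sd_def fps_X_power_mult_nth)
    qed
  qed
  finally show "fps_nth (Sd d * (1 - fps_X ^ d)) j = fps_nth (fps_const (real d) * fps_X ^ d) j" .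
qed

lemma SU_insert:
  assumes "finite F" "d \<notin> F" shows "SU (insert d F) = Sd d + SU F"
proof (rule fps_ext)
  fix j
  have "{x \<in> insert d F. x dvd j} = (if d dvd j then insert d {x\<in>F. x dvd j} else {x\<in>F. x dvd j})"
    by auto
  then show "fps_nth (SU (insert d F)) j = fps_nth (Sd d + SU F) j"
    using assms by (simp add: SU_def Sd_def)
qed

lemma ring_aux1: "(x::'a::comm_ring_1) * (a * p' + a' * p) = (x * a') * p + a * (x * p')"
  by (simp add: algebra_simps)

lemma ring_aux2: "(- (s * a)) * p + a * (- (t * p)) = - ((s + t) * (a * (p::'a::comm_ring_1)))"
  by (simp add: algebra_simps)

lemma PU_deriv:
  assumes "finite U" "0 \<notin> U"
  shows "fps_X * fps_deriv (PU U) = - (SU U * PU U)"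
  using assms
proof (induction U rule: finite_induct)
  case empty
  have "SU {} = 0" by (rule fps_ext) (simp add: SU_def)
  then show ?case by (simp add: PU_def)
next
  case (insert d F)
  let ?X = "fps_X :: real fps"
  have d0: "d > 0" using insert by auto
  have IH: "?X * fps_deriv (PU F) = - (SU F * PU F)" using insert by auto
  have P: "PU (insert d F) = (1 - ?X ^ d) * PU F" using insert by (simp add: PU_def)
  have "fps_deriv (?X ^ d) = fps_const (of_nat d) * fps_deriv ?X * ?X ^ (d - 1)"
    by (rule fps_deriv_power)
  then have "fps_deriv (?X ^ d) = fps_const (real d) * ?X ^ (d - 1)"
    by (simp only: fps_deriv_fps_X mult_1_right)
  moreover have "fps_deriv (1 - ?X ^ d) = - fps_deriv (?X ^ d)"
    by (simp only: fps_deriv_sub fps_deriv_1 diff_0)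
  ultimately have "fps_deriv (1 - ?X ^ d) = - (fps_const (real d) * ?X ^ (d - 1))"
    by simp
  then have "?X * fps_deriv (1 - ?X ^ d) = - (fps_const (real d) * (?X * ?X ^ (d - 1)))"
    by (simp only: mult_minus_right mult.left_commute)
  also have "?X * ?X ^ (d - 1) = ?X ^ d"
  proof -
    have "Suc (d - 1) = d" using d0 by simp
    then show ?thesis using power_Suc[of ?X "d - 1"] by simp
  qed
  finally have dd: "?X * fps_deriv (1 - ?X ^ d) = - (Sd d * (1 - ?X ^ d))"
    using Sd_mult[OF d0] by simp
  have "?X * fps_deriv (PU (insert d F))
      = (?X * fps_deriv (1 - ?X ^ d)) * PU F + (1 - ?X ^ d) * (?X * fps_deriv (PU F))"
    unfolding P fps_deriv_mult by (rule ring_aux1)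
  also have "\<dots> = - ((Sd d + SU F) * ((1 - ?X ^ d) * PU F))"
    unfolding dd IH by (rule ring_aux2)
  finally show ?case using SU_insert[OF insert(1,2)] P by simp
qed

lemma PU_nth0: assumes "0 \<notin> U" shows "fps_nth (PU U) 0 = 1"
  unfolding PU_def nth0_prod
proof (intro prod.neutral ballI)
  fix x assume "x \<in> U"
  then have "x \<noteq> 0" using assms by metis
  then show "fps_nth (1 - fps_X ^ x) 0 = (1::real)" by simp
qed

lemma ode_unique:
  fixes F P S1 S2 :: "real fps"
  assumes "fps_X * fps_deriv F = - (S1 * F)" "fps_X * fps_deriv P = - (S2 * P)"
    "fps_nth F 0 = fps_nth P 0" "fps_nth S1 0 = 0" "fps_nth S2 0 = 0"
    "\<And>j. j \<le> N \<Longrightarrow> fps_nth S1 j = fps_nth S2 j"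
  shows "i \<le> N \<Longrightarrow> fps_nth F i = fps_nth P i"
proof (induction i rule: less_induct)
  case (less i)
  show ?case
  proof (cases "i = 0")
    case True then show ?thesis using assms by simp
  next
    case False
    have cF: "of_nat i * fps_nth F i = - (\<Sum>l=0..i. fps_nth S1 l * fps_nth F (i - l))"
    proof -
      have "fps_nth (fps_X * fps_deriv F) i = of_nat i * fps_nth F i"
        using False by (simp add: fps_X_mult_nth fps_deriv_nth)
      moreover have "fps_nth (S1 * F) i = (\<Sum>l=0..i. fps_nth S1 l * fps_nth F (i - l))"
        by (rule fps_mult_nth)
      ultimately show ?thesis using arg_cong[OF assms(1), of "\<lambda>f. fps_nth f i"] by simp
    qed
    have cP: "of_nat i * fps_nth P i = - (\<Sum>l=0..i. fps_nth S2 l * fps_nth P (i - l))"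
    proof -
      have "fps_nth (fps_X * fps_deriv P) i = of_nat i * fps_nth P i"
        using False by (simp add: fps_X_mult_nth fps_deriv_nth)
      moreover have "fps_nth (S2 * P) i = (\<Sum>l=0..i. fps_nth S2 l * fps_nth P (i - l))"
        by (rule fps_mult_nth)
      ultimately show ?thesis using arg_cong[OF assms(2), of "\<lambda>f. fps_nth f i"] by simp
    qed
    have "(\<Sum>l=0..i. fps_nth S1 l * fps_nth F (i - l)) = (\<Sum>l=0..i. fps_nth S2 l * fps_nth P (i - l))"
    proof (rule sum.cong[OF refl])
      fix l assume l: "l \<in> {0..i}"
      show "fps_nth S1 l * fps_nth F (i - l) = fps_nth S2 l * fps_nth P (i - l)"
      proof (cases "l = 0")
        case True then show ?thesis using assms by simp
      next
        case False
        then show ?thesis using less l assms(6)[of l] by auto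
      qed
    qed
    then have "of_nat i * fps_nth F i = of_nat i * fps_nth P i" using cF cP by simp
    then show ?thesis using False by simp
  qed
qed



definition Uset :: "nat \<Rightarrow> nat \<Rightarrow> nat set" where
  "Uset m n = (\<lambda>i. m * i + 1) ` {..<n} \<union> (\<lambda>i. m * i + m - 1) ` {..<n} \<union> (\<lambda>i. m * (i + 1)) ` {..<n}"

lemma mod1: assumes "(m::nat) \<ge> 3" shows "(m * i + 1) mod m = 1"
proof -
  have "(1 + i * m) mod m = 1 mod m" by (rule mod_mult_self1)
  moreover have "(m * i + 1) mod m = (1 + i * m) mod m" by (simp add: mult.commute)
  ultimately show ?thesis using assms by simp
qed
lemma mod2: assumes "(m::nat) \<ge> 3" shows "(m * i + m - 1) mod m = m - 1"
proof -
  have "((m - 1) + i * m) mod m = (m - 1) mod m" by (rule mod_mult_self1)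
  moreover have "m * i + m - 1 = (m - 1) + i * m" using assms by (simp add: mult.commute)
  ultimately show ?thesis using assms by simp
qed
lemma mod3: "((m::nat) * (i + 1)) mod m = 0" by simp

lemma Uset_finite: "finite (Uset m n)" by (simp add: Uset_def)

lemma Uset_0: "m \<ge> 3 \<Longrightarrow> 0 \<notin> Uset m n" by (auto simp: Uset_def)

lemma PU_Uset:
  assumes "m \<ge> 3" shows "PU (Uset m n) = qp m n * L m n"
proof -
  let ?X = "fps_X :: real fps"
  let ?A1 = "(\<lambda>i. m * i + 1) ` {..<n}" and ?A2 = "(\<lambda>i. m * i + m - 1) ` {..<n}"
    and ?A3 = "(\<lambda>i. m * (i + 1)) ` {..<n}"
  have d12: "?A1 \<inter> ?A2 = {}"
  proof (rule ccontr)
    assume "?A1 \<inter> ?A2 \<noteq> {}"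
    then obtain i j where "m * i + 1 = m * j + m - 1" by auto
    then have "(m * i + 1) mod m = (m * j + m - 1) mod m" by simp
    then show False using mod1[OF assms, of i] mod2[OF assms, of j] assms by simp
  qed
  have n1: "m * i + 1 \<noteq> m * (j + 1)" for i j
    using mod1[OF assms, of i] mod3[of m j] by (metis zero_neq_one)
  have n2: "m * i + m - 1 \<noteq> m * (j + 1)" for i j
    using mod2[OF assms, of i] mod3[of m j] assms by (metis diff_is_0_eq le_trans numeral_le_one_iff semiring_norm(70) not_one_le_zero)
  have d3: "(?A1 \<union> ?A2) \<inter> ?A3 = {}"
    using n1 n2 by blast
  have i1: "inj_on (\<lambda>i. m * i + 1) {..<n}" using assms by (auto intro!: inj_onI)
  have i2: "inj_on (\<lambda>i. m * i + m - 1) {..<n}"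
  proof (rule inj_onI)
    fix x y assume "m * x + m - 1 = m * y + m - 1"
    moreover have "m * x + m - 1 = m * x + (m - 1)" "m * y + m - 1 = m * y + (m - 1)" using assms by simp_all
    ultimately have "m * x = m * y" by simp
    then show "x = y" using assms by simp
  qed
  have i3: "inj_on (\<lambda>i. m * (i + 1)) {..<n}" using assms by (auto intro!: inj_onI)
  have "PU (Uset m n) = (\<Prod>d\<in>?A1. 1 - ?X ^ d) * (\<Prod>d\<in>?A2. 1 - ?X ^ d) * (\<Prod>d\<in>?A3. 1 - ?X ^ d)"
    unfolding PU_def Uset_def using d12 d3 by (simp add: prod.union_disjoint)
  also have "\<dots> = (\<Prod>i<n. 1 - ?X ^ (m * i + 1)) * (\<Prod>i<n. 1 - ?X ^ (m * i + m - 1)) * (\<Prod>i<n. 1 - ?X ^ (m * (i + 1)))"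
    by (simp only: prod.reindex[OF i1] prod.reindex[OF i2] prod.reindex[OF i3] o_def)
  also have "\<dots> = qp m n * L m n"
    by (simp add: qp_def L_def prod.distrib)
  finally show ?thesis .
qed

lemma Uset_dvd:
  assumes "m \<ge> 3" "1 \<le> j" "j < n"
  shows "{d \<in> Uset m n. d dvd j} = {d. d dvd j \<and> (d mod m = 0 \<or> d mod m = 1 \<or> d mod m = m - 1)}"
proof (intro set_eqI iffI)
  fix d assume "d \<in> {d \<in> Uset m n. d dvd j}"
  then show "d \<in> {d. d dvd j \<and> (d mod m = 0 \<or> d mod m = 1 \<or> d mod m = m - 1)}"
    using mod1[OF assms(1)] mod2[OF assms(1)] mod3[of m] by (auto simp: Uset_def)
next
  fix d assume d: "d \<in> {d. d dvd j \<and> (d mod m = 0 \<or> d mod m = 1 \<or> d mod m = m - 1)}"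
  then have dj: "d dvd j" by simp
  then have "d \<le> j" "d > 0" using assms by (auto intro: dvd_imp_le)
  then have dn: "d < n" using assms by simp
  define q where "q = d div m"
  have dq: "d = m * q + d mod m" unfolding q_def by simp
  have qd: "q \<le> d" unfolding q_def by simp
  consider "d mod m = 0" | "d mod m = 1" | "d mod m = m - 1" using d by auto
  then have "d \<in> Uset m n"
  proof cases
    case 1
    then have "q \<ge> 1" using dq \<open>d > 0\<close> by (cases q) auto
    then have "d = m * ((q - 1) + 1)" using dq 1 by simp
    moreover have "q - 1 < n" using qd dn by linarith
    ultimately show ?thesis unfolding Uset_def by blast
  next
    case 2
    then have "d = m * q + 1" "q < n" using dq qd dn by auto
    then show ?thesis unfolding Uset_def by blast
  next
    case 3
    then have "d = m * q + m - 1" "q < n" using dq qd dn assms(1) by auto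
    then show ?thesis unfolding Uset_def by blast
  qed
  then show "d \<in> {d \<in> Uset m n. d dvd j}" using dj by simp
qed

definition Sg :: "nat \<Rightarrow> real fps" where
  "Sg m = Abs_fps (\<lambda>j. if j = 0 then 0 else real (sigma' m j))"

definition Afps :: "nat \<Rightarrow> real fps" where
  "Afps m = Abs_fps (\<lambda>j. if j = 0 then 0 else - (fact (j - 1) * real (sigma' m j)) / fact j)"

lemma aux_fact: "c > 0 \<Longrightarrow> a > 0 \<Longrightarrow> a * (- (c * s) / (a * c)) = - (s::real)"
  by (simp add: field_simps)

lemma X_deriv_A: "fps_X * fps_deriv (Afps m) = - Sg m"
proof (rule fps_ext)
  fix j
  show "fps_nth (fps_X * fps_deriv (Afps m)) j = fps_nth (- Sg m) j"
  proof (cases j)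
    case 0 then show ?thesis by (simp add: fps_X_mult_nth Sg_def)
  next
    case (Suc j')
    have f: "fact (Suc j') = (real (Suc j')) * (fact j' :: real)" by simp
    have "fps_nth (fps_X * fps_deriv (Afps m)) j = real (Suc j') * (- (fact j' * real (sigma' m (Suc j'))) / fact (Suc j'))"
      using Suc by (simp add: fps_X_mult_nth fps_deriv_nth Afps_def)
    also have "\<dots> = - real (sigma' m (Suc j'))"
      unfolding f by (rule aux_fact) auto
    finally show ?thesis using Suc by (simp add: Sg_def)
  qed
qed

lemma exp_ode:
  "fps_X * fps_deriv (fps_exp 1 oo Afps m) = - (Sg m * (fps_exp 1 oo Afps m))"
proof -
  have a0: "fps_nth (Afps m) 0 = 0" by (simp add: Afps_def)
  have "fps_deriv (fps_exp 1 oo Afps m) = (fps_exp 1 oo Afps m) * fps_deriv (Afps m)"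
    using fps_compose_deriv[OF a0, of "fps_exp 1"] by (simp add: fps_exp_deriv)
  then have "fps_X * fps_deriv (fps_exp 1 oo Afps m) = (fps_exp 1 oo Afps m) * (fps_X * fps_deriv (Afps m))"
    by (simp add: algebra_simps)
  then show ?thesis unfolding X_deriv_A by simp
qed



theorem theorem3p1:
  fixes n m :: nat
  assumes "n \<ge> 1" and "m \<ge> 3"
  shows "bell_complete n (\<lambda>j. - (fact (j - 1) * real (sigma' m j)))
           = fact n * real_of_int (e_coef (m + 2) n)"
proof -
  define K where "K = 2 * n + 1"
  define Fe where "Fe = fps_exp (1::real) oo Afps m"
  have bell: "bell_complete n (\<lambda>j. - (fact (j - 1) * real (sigma' m j))) = fact n * fps_nth Fe n"
    unfolding bell_complete_def Fe_def Afps_def by (rule refl)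
  have S_eq: "fps_nth (Sg m) j = fps_nth (SU (Uset m K)) j" if "j \<le> n" for j
  proof (cases "j = 0")
    case True then show ?thesis by (simp add: Sg_def SU_def)
  next
    case False
    have "{d \<in> Uset m K. d dvd j} = {d. d dvd j \<and> (d mod m = 0 \<or> d mod m = 1 \<or> d mod m = m - 1)}"
      by (rule Uset_dvd) (use assms that False K_def in auto)
    then show ?thesis using False by (simp add: Sg_def SU_def sigma'_def)
  qed
  have ode: "fps_nth Fe i = fps_nth (PU (Uset m K)) i" if "i \<le> n" for i
  proof (rule ode_unique[OF _ _ _ _ _ _ that])
    show "fps_X * fps_deriv Fe = - (Sg m * Fe)" unfolding Fe_def by (rule exp_ode)
    show "fps_X * fps_deriv (PU (Uset m K)) = - (SU (Uset m K) * PU (Uset m K))"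
      by (rule PU_deriv[OF Uset_finite Uset_0[OF assms(2)]])
    show "fps_nth Fe 0 = fps_nth (PU (Uset m K)) 0"
      using PU_nth0[OF Uset_0[OF assms(2)]] by (simp add: Fe_def fps_compose_nth_0)
    show "fps_nth (Sg m) 0 = 0" by (simp add: Sg_def)
    show "fps_nth (SU (Uset m K)) 0 = 0" by (simp add: SU_def)
    show "\<And>j. j \<le> n \<Longrightarrow> fps_nth (Sg m) j = fps_nth (SU (Uset m K)) j" by (rule S_eq)
  qed
  have "PU (Uset m K) = qp m K * R m K"
    using PU_Uset[OF assms(2)] L_eq_R[OF assms(2)] by simp
  moreover have "fcong n (qp m K * R m K) (Th m K)"
    by (rule R_cong_Th) (use assms K_def in auto)
  ultimately have "fps_nth Fe n = fps_nth (Th m K) n"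
    using ode[of n] by (simp add: fcong_def)
  also have "\<dots> = real_of_int (e_coef (m + 2) n)"
    by (rule Th_nth) (use assms K_def in auto)
  finally show ?thesis using bell by simp
qed

end
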